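(* Let $v\in\tilde{\mathcal{X}}^1$. Then $\inf_{x\in\mathbb{R}}|v(x)|\le\frac{E(v)}{\sqrt2\,|p(v)|}$ (the right-hand side being $+\infty$ if $p(v)=0$). In particular, if $\delta(v)=1-\frac{E(v)}{\sqrt2|p(v)|}>0$, then for every $0<\delta<\delta(v)$ there exists $x_\delta\in\mathbb{R}$ with $1-|v(x_\delta)|\ge\delta$.
   Context: $\mathcal{X}^1=\{w\in L^\infty(\mathbb{R};\mathbb{C}):\ w'\in L^2,\ 1-|w|^2\in L^2\}$; $\tilde{\mathcal{X}}^1=\{v\in\mathcal{X}^1:\ |v(x)|>0\ \forall x\}$. $E(v)=\frac12\int|v'|^2+\frac14\int(1-|v|^2)^2$. For $v\in\tilde{\mathcal{X}}^1$ write $v=\varrho e^{i\varphi}$ with $\varrho=|v|$ and $\varphi$ a continuous real phase; $p(v)=\frac12\int_\mathbb{R}(\varrho^2-1)\varphi'$. *)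

theory Defs
  imports "HOL-Analysis.Analysis"
begin

text \<open>Weak (distributional) derivative on the real line, in its one-dimensional
  form: w is a measurable, locally integrable function whose integrals over
  compact intervals recover the increments of f (so f is locally absolutely
  continuous with f' = w a.e.).\<close>
definition is_weak_deriv :: "(real \<Rightarrow> 'a::euclidean_space) \<Rightarrow> (real \<Rightarrow> 'a) \<Rightarrow> bool" where
  "is_weak_deriv f w \<longleftrightarrow> w \<in> borel_measurable lborel \<and>
     (\<forall>a b. a \<le> b \<longrightarrow> (w has_integral (f b - f a)) {a..b})"

definition X1 :: "(real \<Rightarrow> complex) \<Rightarrow> bool" where
  "X1 v \<longleftrightarrow> bounded (range v)
     \<and> (\<exists>w. is_weak_deriv v w \<and> integrable lborel (\<lambda>x. (norm (w x))\<^sup>2))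
     \<and> integrable lborel (\<lambda>x. (1 - (norm (v x))\<^sup>2)\<^sup>2)"

definition X1_tilde :: "(real \<Rightarrow> complex) \<Rightarrow> bool" where
  "X1_tilde v \<longleftrightarrow> X1 v \<and> (\<forall>x. v x \<noteq> 0)"

text \<open>The derivative v' (unique a.e., so integrals below do not depend on the choice).\<close>
definition vderiv :: "(real \<Rightarrow> complex) \<Rightarrow> real \<Rightarrow> complex" where
  "vderiv v = (SOME w. is_weak_deriv v w \<and> integrable lborel (\<lambda>x. (norm (w x))\<^sup>2))"

definition energy :: "(real \<Rightarrow> complex) \<Rightarrow> real" where
  "energy v = (1/2) * (\<integral>x. (norm (vderiv v x))\<^sup>2 \<partial>lborel)
            + (1/4) * (\<integral>x. (1 - (norm (v x))\<^sup>2)\<^sup>2 \<partial>lborel)"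

text \<open>A continuous real phase of v (v = |v| e^{i phi}); unique up to a constant 2 pi k.\<close>
definition phase :: "(real \<Rightarrow> complex) \<Rightarrow> real \<Rightarrow> real" where
  "phase v = (SOME \<phi>. continuous_on UNIV \<phi> \<and> (\<forall>x. v x = complex_of_real (norm (v x)) * cis (\<phi> x)))"

definition momentum :: "(real \<Rightarrow> complex) \<Rightarrow> real" where
  "momentum v = (1/2) * (\<integral>x. ((norm (v x))\<^sup>2 - 1) * (SOME \<psi>. is_weak_deriv (phase v) \<psi>) x \<partial>lborel)"

end

theory Submission
  imports Defs
begin



lemma subadd_bound:
  fixes S A :: "real \<Rightarrow> real \<Rightarrow> real"
  assumes sub: "\<And>x y z. a \<le> x \<Longrightarrow> x \<le> y \<Longrightarrow> y \<le> z \<Longrightarrow> z \<le> b \<Longrightarrow> S x z \<le> S x y + S y z"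
    and add: "\<And>x y z. a \<le> x \<Longrightarrow> x \<le> y \<Longrightarrow> y \<le> z \<Longrightarrow> z \<le> b \<Longrightarrow> A x z = A x y + A y z"
    and d: "d > 0"
    and loc: "\<And>x y. a \<le> x \<Longrightarrow> x \<le> y \<Longrightarrow> y \<le> b \<Longrightarrow> y - x \<le> d \<Longrightarrow> S x y \<le> A x y"
    and xy: "a \<le> x" "x \<le> y" "y \<le> b"
  shows "S x y \<le> A x y"
proof -
  have main: "\<forall>x y. a \<le> x \<longrightarrow> x \<le> y \<longrightarrow> y \<le> b \<longrightarrow> y - x \<le> real n * d \<longrightarrow> S x y \<le> A x y" for n
  proof (induction n)
    case 0
    show ?case proof (intro allI impI)
      fix x y assume h: "a \<le> x" "x \<le> y" "y \<le> b" "y - x \<le> real 0 * d"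
      then have "y - x \<le> d" using d by simp
      then show "S x y \<le> A x y" using loc[OF h(1-3)] by simp
    qed
  next
    case (Suc n)
    show ?case
    proof (intro allI impI)
      fix x y assume h: "a \<le> x" "x \<le> y" "y \<le> b" "y - x \<le> real (Suc n) * d"
      show "S x y \<le> A x y"
      proof (cases "y - x \<le> d")
        case True then show ?thesis using loc[OF h(1-3)] by simp
      next
        case False
        let ?c = "x + d"
        have c: "x \<le> ?c" "?c \<le> y" using False d by auto
        have "S x y \<le> S x ?c + S ?c y" using sub[of x ?c y] h c by linarith
        also have "\<dots> \<le> A x ?c + A ?c y"
        proof -
          have "y - ?c \<le> real n * d" using h by (simp add: algebra_simps)
          then have "S ?c y \<le> A ?c y" using Suc.IH h c by (meson order_trans)
          moreover have "S x ?c \<le> A x ?c" using loc[of x ?c] h c by auto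
          ultimately show ?thesis by linarith
        qed
        also have "\<dots> = A x y" using add[of x ?c y] h c by linarith
        finally show ?thesis .
      qed
    qed
  qed
  obtain n where n: "(y - x) / d \<le> real n"
    using real_arch_simple by blast
  then have "y - x \<le> real n * d" using d by (simp add: divide_le_eq)
  then show ?thesis using xy main[of n] by blast
qed




lemma weak_cont:
  assumes "is_weak_deriv f w"
  shows "continuous_on UNIV f"
proof -
  have "isCont f x0" for x0
  proof -
    let ?a = "x0 - 1" and ?b = "x0 + 1"
    have eq: "f t = f ?a + integral {?a..t} w" if "t \<in> {?a..?b}" for t
    proof -
      have "(w has_integral (f t - f ?a)) {?a..t}" using assms that unfolding is_weak_deriv_def by auto
      then have "integral {?a..t} w = f t - f ?a" by (rule integral_unique)
      then show ?thesis by simp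
    qed
    have int: "w integrable_on {?a..?b}" using assms unfolding is_weak_deriv_def
    proof -
      have "(w has_integral (f ?b - f ?a)) {?a..?b}" using assms unfolding is_weak_deriv_def by simp
      then show ?thesis by (rule has_integral_integrable)
    qed
    have "continuous_on {?a..?b} (\<lambda>t. f ?a + integral {?a..t} w)"
      using indefinite_integral_continuous_1[OF int] by (intro continuous_on_add continuous_on_const)
    then have "continuous_on {?a..?b} f"
    proof (rule continuous_on_eq)
      fix t assume "t \<in> {?a..?b}"
      from eq[OF this] show "f ?a + integral {?a..t} w = f t" by (rule sym)
    qed
    moreover have "x0 \<in> interior {?a..?b}" by auto
    ultimately show ?thesis using continuous_on_interior by blast
  qed
  then show ?thesis by (simp add: continuous_at_imp_continuous_on)
qed



lemma L2_loc_int: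
  fixes w :: "real \<Rightarrow> complex"
  assumes m: "w \<in> borel_measurable lborel" and i: "integrable lborel (\<lambda>x. (norm (w x))\<^sup>2)"
  shows "w absolutely_integrable_on {a..b}"
proof -
  have "integrable lborel (\<lambda>x. indicator {a..b} x *\<^sub>R w x)"
  proof (rule Bochner_Integration.integrable_bound)
    show "integrable lborel (\<lambda>x. indicator {a..b} x + (norm (w x))\<^sup>2 :: real)"
    proof (rule Bochner_Integration.integrable_add)
      show "integrable lborel (indicator {a..b} :: real \<Rightarrow> real)"
        by (rule integrable_real_indicator) (simp, rule emeasure_bounded_finite, simp)
    qed (rule i)
    show "(\<lambda>x. indicator {a..b} x *\<^sub>R w x) \<in> borel_measurable lborel" using m by measurable
    show "AE x in lborel. norm (indicator {a..b} x *\<^sub>R w x) \<le> norm (indicator {a..b} x + (norm (w x))\<^sup>2 :: real)"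
    proof (rule AE_I2)
      fix x
      have "norm (w x) \<le> 1 + (norm (w x))\<^sup>2"
      proof (cases "norm (w x) \<le> 1")
        case True then show ?thesis by (simp add: add_increasing2)
      next
        case False then have "norm (w x) * 1 \<le> norm (w x) * norm (w x)" by (intro mult_left_mono) auto
        then show ?thesis by (simp add: power2_eq_square)
      qed
      then show "norm (indicator {a..b} x *\<^sub>R w x) \<le> norm (indicator {a..b} x + (norm (w x))\<^sup>2 :: real)"
      proof (cases "x \<in> {a..b}")
        case True
        have "norm (indicator {a..b} x *\<^sub>R w x) = norm (w x)" using True by simp
        also have "\<dots> \<le> indicator {a..b} x + (norm (w x))\<^sup>2" using True \<open>norm (w x) \<le> 1 + _\<close> by simp
        also have "\<dots> \<le> norm (indicator {a..b} x + (norm (w x))\<^sup>2 :: real)" unfolding real_norm_def by (rule abs_ge_self)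
        finally show ?thesis .
      next
        case False then show ?thesis by simp
      qed
    qed
  qed
  then show ?thesis unfolding set_integrable_def using m
    by (simp add: integrable_completion)
qed




lemma AIP_c:
  fixes c g :: "real \<Rightarrow> 'a::{euclidean_space,real_algebra}"
  assumes c: "continuous_on {a..b} c" and g: "g absolutely_integrable_on {a..b}"
  shows "(\<lambda>t. c t * g t) absolutely_integrable_on {a..b}"
proof (rule absolutely_integrable_bounded_measurable_product[OF bilinear_times])
  show "c \<in> borel_measurable (lebesgue_on {a..b})"
    by (rule continuous_imp_measurable_on_sets_lebesgue[OF c]) simp
  show "bounded (c ` {a..b})" by (rule compact_imp_bounded, rule compact_continuous_image[OF c]) simp
qed (use g in auto)

lemma intL:
  fixes f :: "real \<Rightarrow> 'a::euclidean_space"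
  assumes i: "integrable lborel f" and m: "f \<in> borel_measurable borel"
  shows "f absolutely_integrable_on {a..b}"
proof -
  have "integrable lborel (\<lambda>x. indicator {a..b} x *\<^sub>R f x)"
    by (rule integrable_mult_indicator[OF _ i]) simp
  then show ?thesis unfolding set_integrable_def using m
    by (simp add: integrable_completion)
qed

lemma CS_int:
  fixes f :: "real \<Rightarrow> real"
  assumes f: "f integrable_on {x..y}" and f2: "(\<lambda>t. (f t)\<^sup>2) integrable_on {x..y}" and xy: "x \<le> y"
  shows "(integral {x..y} f)\<^sup>2 \<le> (y - x) * integral {x..y} (\<lambda>t. (f t)\<^sup>2)"
proof (cases "x = y")
  case True then show ?thesis by simp
next
  case False
  then have h: "y - x > 0" using xy by simp
  define A where "A = integral {x..y} f"
  define k where "k = A / (y - x)"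
  have eq: "(\<lambda>t. (f t - k)\<^sup>2) = (\<lambda>t. ((f t)\<^sup>2 - (2 * k) * f t) + k\<^sup>2)"
    by (auto simp: power2_eq_square algebra_simps)
  have i1: "(\<lambda>t. (f t)\<^sup>2 - (2 * k) * f t) integrable_on {x..y}"
    by (intro integrable_diff f2 integrable_on_mult_right f)
  have i2: "(\<lambda>t. (f t - k)\<^sup>2) integrable_on {x..y}"
    unfolding eq by (intro integrable_add i1 integrable_const_ivl)
  have "0 \<le> integral {x..y} (\<lambda>t. (f t - k)\<^sup>2)"
    by (rule integral_nonneg[OF i2]) simp
  also have "integral {x..y} (\<lambda>t. (f t - k)\<^sup>2)
      = integral {x..y} (\<lambda>t. (f t)\<^sup>2) - 2 * k * A + k\<^sup>2 * (y - x)"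
  proof -
    have "integral {x..y} (\<lambda>t. ((f t)\<^sup>2 - (2 * k) * f t) + k\<^sup>2)
        = integral {x..y} (\<lambda>t. (f t)\<^sup>2 - (2 * k) * f t) + integral {x..y} (\<lambda>t. k\<^sup>2)"
      by (rule integral_add[OF i1 integrable_const_ivl])
    also have "integral {x..y} (\<lambda>t. (f t)\<^sup>2 - (2 * k) * f t)
        = integral {x..y} (\<lambda>t. (f t)\<^sup>2) - integral {x..y} (\<lambda>t. (2 * k) * f t)"
      by (rule integral_diff[OF f2]) (intro integrable_on_mult_right f)
    also have "integral {x..y} (\<lambda>t. (2 * k) * f t) = 2 * k * A"
      unfolding A_def by simp
    also have "integral {x..y} (\<lambda>t. k\<^sup>2) = k\<^sup>2 * (y - x)" using xy by simp
    finally show ?thesis unfolding eq .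
  qed
  also have "\<dots> = integral {x..y} (\<lambda>t. (f t)\<^sup>2) - A\<^sup>2 / (y - x)"
  proof -
    have "\<And>hh::real. hh \<noteq> 0 \<Longrightarrow> 2 * (A / hh) * A - (A / hh)\<^sup>2 * hh = A\<^sup>2 / hh"
      by (simp add: field_simps power2_eq_square)
    from this[of "y - x"] h show ?thesis unfolding k_def by simp
  qed
  finally have "A\<^sup>2 / (y - x) \<le> integral {x..y} (\<lambda>t. (f t)\<^sup>2)" by simp
  then show ?thesis using h unfolding A_def by (simp add: divide_le_eq mult.commute)
qed

lemma Ln_est:
  fixes u :: complex
  assumes "norm u \<le> 1/2"
  shows "norm (Ln (1 + u) - u) \<le> 2 * (norm u)\<^sup>2"
proof -
  have "norm (Ln (1 + u) - u) \<le> (norm u)\<^sup>2 / (1 - norm u)"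
    using assms by (intro Ln_approx_linear) simp
  also have "\<dots> \<le> 2 * (norm u)\<^sup>2"
  proof -
    have "(norm u)\<^sup>2 * 1 \<le> (norm u)\<^sup>2 * (2 * (1 - norm u))"
      using assms by (intro mult_left_mono) auto
    then show ?thesis using assms by (simp add: divide_le_eq algebra_simps)
  qed
  finally show ?thesis .
qed






lemma uc_ab:
  fixes f :: "real \<Rightarrow> 'a::metric_space"
  assumes "continuous_on UNIV f" "e > 0"
  shows "\<exists>d>0. \<forall>x\<in>{a..b}. \<forall>y\<in>{a..b}. \<bar>y - x\<bar> \<le> d \<longrightarrow> dist (f y) (f x) < e"
proof -
  have "uniformly_continuous_on {a..b} f"
    by (rule compact_uniformly_continuous) (use assms(1) continuous_on_subset in auto)
  then obtain d where d: "d > 0" "\<And>x y. x \<in> {a..b} \<Longrightarrow> y \<in> {a..b} \<Longrightarrow> dist y x < d \<Longrightarrow> dist (f y) (f x) < e"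
    unfolding uniformly_continuous_on_def using assms(2) by metis
  show ?thesis
    by (rule exI[of _ "d/2"]) (use d in \<open>auto simp: dist_real_def\<close>)
qed

locale ph_setting =
  fixes v w :: "real \<Rightarrow> complex" and \<phi> :: "real \<Rightarrow> real"
  assumes wd: "is_weak_deriv v w"
    and w2: "integrable lborel (\<lambda>x. (norm (w x))\<^sup>2)"
    and nz: "\<And>x. v x \<noteq> 0"
    and phc: "continuous_on UNIV \<phi>"
    and rep: "\<And>x. v x = complex_of_real (norm (v x)) * cis (\<phi> x)"
begin

lemma vc: "continuous_on UNIV v" using weak_cont[OF wd] .

lemma rc: "continuous_on UNIV (\<lambda>x. norm (v x))"
  by (intro continuous_on_norm vc)

lemma wm: "w \<in> borel_measurable borel" using wd unfolding is_weak_deriv_def by simp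

lemma wai: "w absolutely_integrable_on {a..b}"
  using L2_loc_int[OF _ w2] wm by simp

lemma wi: "w integrable_on {a..b}"
  using wai set_lebesgue_integral_eq_integral(1) by blast

lemma nwi: "(\<lambda>t. norm (w t)) integrable_on {a..b}"
  using wai absolutely_integrable_on_def by blast

lemma Dv: "x \<le> y \<Longrightarrow> v y - v x = integral {x..y} w"
proof -
  assume "x \<le> y"
  then have "(w has_integral (v y - v x)) {x..y}" using wd unfolding is_weak_deriv_def by blast
  then show ?thesis by (rule integral_unique[symmetric])
qed

lemma Dv_bound: "x \<le> y \<Longrightarrow> norm (v y - v x) \<le> integral {x..y} (\<lambda>t. norm (w t))"
  unfolding Dv by (rule integral_norm_bound_integral[OF wi nwi]) simp

lemma rpos: "norm (v x) > 0" using nz by simp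

lemma Ln_loc:
  assumes "\<bar>\<phi> y - \<phi> x\<bar> < pi"
  shows "Im (Ln (v y / v x)) = \<phi> y - \<phi> x"
proof -
  define rx where "rx = norm (v x)"
  define ry where "ry = norm (v y)"
  let ?r = "ry / rx"
  have ex: "v x = complex_of_real rx * cis (\<phi> x)" using rep[of x, folded rx_def] .
  have ey: "v y = complex_of_real ry * cis (\<phi> y)" using rep[of y, folded ry_def] .
  have rx: "rx > 0" "ry > 0" unfolding rx_def ry_def using rpos by auto
  have r: "?r > 0" using rx by simp
  have "v y / v x = complex_of_real ?r * cis (\<phi> y - \<phi> x)"
    unfolding ex ey using rx by (simp add: cis_divide[symmetric])
  also have "\<dots> = exp (complex_of_real (ln ?r) + \<i> * complex_of_real (\<phi> y - \<phi> x))"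
    using r by (simp add: exp_add cis_conv_exp exp_of_real)
  finally have "Ln (v y / v x) = complex_of_real (ln ?r) + \<i> * complex_of_real (\<phi> y - \<phi> x)"
    using assms by (simp add: Ln_exp)
  then show ?thesis by simp
qed

lemma posmin: "\<exists>\<mu>>0. \<forall>t\<in>{a..b}. \<mu> \<le> norm (v t)"
proof (cases "a \<le> b")
  case True
  then obtain t0 where "t0 \<in> {a..b}" "\<forall>t\<in>{a..b}. norm (v t0) \<le> norm (v t)"
  proof -
    have "continuous_on {a..b} (\<lambda>t. norm (v t))" using rc continuous_on_subset by blast
    moreover have "{a..b} \<noteq> {}" using True by simp
    ultimately show ?thesis using continuous_attains_inf[of "{a..b}" "\<lambda>t. norm (v t)"] that by auto
  qed
  then show ?thesis using rpos[of t0] by blast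
next
  case False then show ?thesis by (intro exI[of _ 1]) auto
qed

end



context ph_setting begin

definition c :: "real \<Rightarrow> complex" where
  "c t = cnj (v t) / complex_of_real ((norm (v t))\<^sup>2)"

definition psi0 :: "real \<Rightarrow> real" where
  "psi0 t = Im (c t * w t)"

lemma cc: "continuous_on UNIV c"
  unfolding c_def using rpos
  by (intro continuous_intros vc) auto

lemma u_id: "(v y - v x) / v x = c x * (v y - v x)"
  unfolding c_def by (subst complex_div_cnj) (simp add: mult.commute)

lemma cwai: "(\<lambda>t. c t * w t) absolutely_integrable_on {a..b}"
  by (rule AIP_c[OF continuous_on_subset[OF cc] wai]) simp

lemma cwi: "(\<lambda>t. c t * w t) integrable_on {a..b}"
  using cwai set_lebesgue_integral_eq_integral(1) by blast

lemma psi0_ai: "psi0 absolutely_integrable_on {a..b}"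
proof -
  have "(Im \<circ> (\<lambda>t. c t * w t)) absolutely_integrable_on {a..b}"
    by (rule absolutely_integrable_linear[OF cwai bounded_linear_Im])
  then show ?thesis by (simp add: psi0_def[abs_def] o_def)
qed

lemma psi0_i: "psi0 integrable_on {a..b}"
  using psi0_ai set_lebesgue_integral_eq_integral(1) by blast

lemma npsi0_i: "(\<lambda>t. \<bar>psi0 t\<bar>) integrable_on {a..b}"
proof -
  have "(\<lambda>t. norm (psi0 t)) integrable_on {a..b}" using psi0_ai absolutely_integrable_on_def by blast
  then show ?thesis by simp
qed

lemma int_psi0: "integral {x..y} psi0 = Im (integral {x..y} (\<lambda>t. c t * w t))"
proof -
  have "integral {x..y} (Im \<circ> (\<lambda>t. c t * w t)) = Im (integral {x..y} (\<lambda>t. c t * w t))"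
    by (rule integral_linear[OF cwi bounded_linear_Im])
  then show ?thesis by (simp add: psi0_def[abs_def] o_def)
qed

lemma chain_local:
  assumes e: "e > 0"
  shows "\<exists>d>0. \<forall>x y. a \<le> x \<longrightarrow> x \<le> y \<longrightarrow> y \<le> b \<longrightarrow> y - x \<le> d \<longrightarrow>
     \<bar>(\<phi> y - \<phi> x) - integral {x..y} psi0\<bar> \<le> e * integral {x..y} (\<lambda>t. norm (w t))"
proof -
  obtain \<mu> where mu: "\<mu> > 0" "\<And>t. t \<in> {a..b} \<Longrightarrow> \<mu> \<le> norm (v t)" using posmin[of a b] by blast
  define e1 where "e1 = min (\<mu>/2) (e * \<mu>\<^sup>2 / 4)"
  have e1: "e1 > 0" using mu e unfolding e1_def by simp
  from uc_ab[OF vc e1, of a b]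
  obtain d1 where d1: "d1 > 0" "\<forall>x\<in>{a..b}. \<forall>y\<in>{a..b}. \<bar>y - x\<bar> \<le> d1 \<longrightarrow> dist (v y) (v x) < e1"
    by (elim exE conjE)
  have "e/2 > 0" using e by simp
  from uc_ab[OF cc this, of a b]
  obtain d2 where d2: "d2 > 0" "\<forall>x\<in>{a..b}. \<forall>y\<in>{a..b}. \<bar>y - x\<bar> \<le> d2 \<longrightarrow> dist (c y) (c x) < e/2"
    by (elim exE conjE)
  from uc_ab[OF phc pi_gt_zero, of a b]
  obtain d3 where d3: "d3 > 0" "\<forall>x\<in>{a..b}. \<forall>y\<in>{a..b}. \<bar>y - x\<bar> \<le> d3 \<longrightarrow> dist (\<phi> y) (\<phi> x) < pi"
    by (elim exE conjE)
  define d where "d = min d1 (min d2 d3)"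
  have "d > 0" using d1 d2 d3 unfolding d_def by simp
  moreover have "\<bar>(\<phi> y - \<phi> x) - integral {x..y} psi0\<bar> \<le> e * integral {x..y} (\<lambda>t. norm (w t))"
    if xy: "a \<le> x" "x \<le> y" "y \<le> b" "y - x \<le> d" for x y
  proof -
    let ?N = "integral {x..y} (\<lambda>t. norm (w t))"
    define u where "u = (v y - v x) / v x"
    have xin: "x \<in> {a..b}" and yin: "y \<in> {a..b}" using xy by auto
    have dv: "norm (v y - v x) < e1" using d1(2) xin yin xy unfolding d_def by (auto simp: dist_norm)
    have dvN: "norm (v y - v x) \<le> ?N" by (rule Dv_bound[OF xy(2)])
    have rx: "\<mu> \<le> norm (v x)" using mu(2)[OF xin] .
    have nu: "norm u = norm (v y - v x) / norm (v x)" unfolding u_def by (simp add: norm_divide)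
    have nu1: "norm u \<le> norm (v y - v x) / \<mu>"
      unfolding nu using rx mu(1) rpos[of x] by (intro divide_left_mono) auto
    have nu2: "norm u \<le> 1/2"
    proof -
      have "norm (v y - v x) \<le> \<mu>/2" using dv e1_def by simp
      then have "norm (v y - v x) / \<mu> \<le> 1/2" using mu(1) by (simp add: divide_le_eq)
      then show ?thesis using nu1 by linarith
    qed
    have nu3: "norm u \<le> e * \<mu> / 4"
    proof -
      have "norm (v y - v x) \<le> e * \<mu>\<^sup>2 / 4" using dv e1_def by simp
      then have "norm (v y - v x) / \<mu> \<le> e * \<mu> / 4" using mu(1) by (simp add: divide_le_eq power2_eq_square)
      then show ?thesis using nu1 by linarith
    qed
    have ph: "\<bar>\<phi> y - \<phi> x\<bar> < pi" using d3(2) xin yin xy unfolding d_def by (auto simp: dist_real_def)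
    have "\<phi> y - \<phi> x = Im (Ln (v y / v x))" using Ln_loc[OF ph] by simp
    also have "v y / v x = 1 + u" unfolding u_def using nz[of x] by (simp add: field_simps)
    finally have D: "\<phi> y - \<phi> x = Im (Ln (1 + u))" .
    have "\<bar>Im (Ln (1 + u)) - Im u\<bar> \<le> norm (Ln (1 + u) - u)"
      using abs_Im_le_cmod[of "Ln (1 + u) - u"] by simp
    also have "\<dots> \<le> 2 * (norm u)\<^sup>2" by (rule Ln_est[OF nu2])
    also have "\<dots> \<le> e / 2 * ?N"
    proof -
      have "2 * (norm u)\<^sup>2 = 2 * norm u * norm u" by (simp add: power2_eq_square)
      also have "\<dots> \<le> 2 * (e * \<mu> / 4) * (?N / \<mu>)"
      proof (intro mult_mono)
        show "norm u \<le> ?N / \<mu>" using nu1 dvN mu(1) by (smt (verit) divide_right_mono)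
      qed (use nu3 e mu in auto)
      also have "\<dots> = e / 2 * ?N" using mu(1) by (simp add: field_simps)
      finally show ?thesis .
    qed
    finally have A1: "\<bar>Im (Ln (1 + u)) - Im u\<bar> \<le> e / 2 * ?N" .
    have iw: "w integrable_on {x..y}" by (rule wi)
    have icw: "(\<lambda>t. c t * w t) integrable_on {x..y}" by (rule cwi)
    have "u = c x * (v y - v x)" unfolding u_def by (rule u_id)
    then have "Im u = Im (c x * integral {x..y} w)" using Dv[OF xy(2)] by simp
    also have "c x * integral {x..y} w = integral {x..y} (\<lambda>t. c x * w t)"
      by (rule integral_unique[symmetric], rule has_integral_mult_right, rule integrable_integral[OF iw])
    finally have imu: "Im u - integral {x..y} psi0 = Im (integral {x..y} (\<lambda>t. (c x - c t) * w t))"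
      unfolding int_psi0
      by (simp add: left_diff_distrib integral_diff[OF integrable_on_mult_right[OF iw] icw])
    have "\<bar>Im u - integral {x..y} psi0\<bar> \<le> norm (integral {x..y} (\<lambda>t. (c x - c t) * w t))"
      unfolding imu by (rule abs_Im_le_cmod)
    also have "\<dots> \<le> integral {x..y} (\<lambda>t. e / 2 * norm (w t))"
    proof (rule integral_norm_bound_integral)
      show "(\<lambda>t. (c x - c t) * w t) integrable_on {x..y}"
        by (simp add: left_diff_distrib integrable_diff[OF integrable_on_mult_right[OF iw] icw])
      show "(\<lambda>t. e / 2 * norm (w t)) integrable_on {x..y}"
        by (intro integrable_on_mult_right nwi)
      fix t assume t: "t \<in> {x..y}"
      then have tin: "t \<in> {a..b}" using xy by auto
      have "dist (c t) (c x) < e/2" using d2(2) xin tin t xy unfolding d_def by auto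
      then have "norm (c x - c t) \<le> e/2" by (simp add: dist_norm norm_minus_commute)
      then have "norm (c x - c t) * norm (w t) \<le> e / 2 * norm (w t)"
        by (rule mult_right_mono) simp
      then show "norm ((c x - c t) * w t) \<le> e / 2 * norm (w t)"
        by (simp add: norm_mult)
    qed
    also have "\<dots> = e / 2 * ?N" by simp
    finally have A2: "\<bar>Im u - integral {x..y} psi0\<bar> \<le> e / 2 * ?N" .
    show ?thesis unfolding D using A1 A2 by linarith
  qed
  ultimately show ?thesis by blast
qed

end



context ph_setting begin

lemma chain:
  assumes ab: "a \<le> b"
  shows "\<phi> b - \<phi> a = integral {a..b} psi0"
proof -
  let ?N = "integral {a..b} (\<lambda>t. norm (w t))"
  have N0: "?N \<ge> 0" by (rule integral_nonneg[OF nwi]) simp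
  have key: "\<bar>(\<phi> b - \<phi> a) - integral {a..b} psi0\<bar> \<le> e * ?N" if e: "e > 0" for e
  proof -
    from chain_local[OF e, of a b]
    obtain d where d: "d > 0" "\<forall>x y. a \<le> x \<longrightarrow> x \<le> y \<longrightarrow> y \<le> b \<longrightarrow> y - x \<le> d \<longrightarrow>
     \<bar>(\<phi> y - \<phi> x) - integral {x..y} psi0\<bar> \<le> e * integral {x..y} (\<lambda>t. norm (w t))"
      by (elim exE conjE)
    show ?thesis
    proof (rule subadd_bound[where S = "\<lambda>x y. \<bar>(\<phi> y - \<phi> x) - integral {x..y} psi0\<bar>"
          and A = "\<lambda>x y. e * integral {x..y} (\<lambda>t. norm (w t))", OF _ _ d(1)])
      fix x y z assume h: "a \<le> x" "x \<le> y" "y \<le> z" "z \<le> b"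
      have "integral {x..y} psi0 + integral {y..z} psi0 = integral {x..z} psi0"
        by (rule Henstock_Kurzweil_Integration.integral_combine[OF h(2,3) psi0_i])
      then show "\<bar>(\<phi> z - \<phi> x) - integral {x..z} psi0\<bar>
           \<le> \<bar>(\<phi> y - \<phi> x) - integral {x..y} psi0\<bar> + \<bar>(\<phi> z - \<phi> y) - integral {y..z} psi0\<bar>"
        by linarith
      have "integral {x..y} (\<lambda>t. norm (w t)) + integral {y..z} (\<lambda>t. norm (w t)) = integral {x..z} (\<lambda>t. norm (w t))"
        by (rule Henstock_Kurzweil_Integration.integral_combine[OF h(2,3) nwi])
      then show "e * integral {x..z} (\<lambda>t. norm (w t)) = e * integral {x..y} (\<lambda>t. norm (w t)) + e * integral {y..z} (\<lambda>t. norm (w t))"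
        by (simp add: distrib_left[symmetric])
    next
      fix x y assume "a \<le> x" "x \<le> y" "y \<le> b" "y - x \<le> d"
      then show "\<bar>(\<phi> y - \<phi> x) - integral {x..y} psi0\<bar> \<le> e * integral {x..y} (\<lambda>t. norm (w t))"
        using d(2) by blast
    qed (use ab in auto)
  qed
  have "\<bar>(\<phi> b - \<phi> a) - integral {a..b} psi0\<bar> \<le> 0"
  proof (rule field_le_epsilon)
    fix e :: real assume e: "e > 0"
    have "\<bar>(\<phi> b - \<phi> a) - integral {a..b} psi0\<bar> \<le> (e / (?N + 1)) * ?N"
      using key[of "e / (?N + 1)"] e N0 by simp
    also have "\<dots> \<le> e"
      using e N0 by (simp add: field_simps)
    finally show "\<bar>(\<phi> b - \<phi> a) - integral {a..b} psi0\<bar> \<le> 0 + e" by simp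
  qed
  then show ?thesis by simp
qed

lemma vm: "v \<in> borel_measurable borel"
  by (rule borel_measurable_continuous_onI[OF vc])

lemma psi0_m: "psi0 \<in> borel_measurable borel"
proof -
  have "c \<in> borel_measurable borel" by (rule borel_measurable_continuous_onI[OF cc])
  then show ?thesis unfolding psi0_def[abs_def] using wm by measurable
qed

lemma wd_phi: "is_weak_deriv \<phi> psi0"
  unfolding is_weak_deriv_def
proof (intro conjI allI impI)
  show "psi0 \<in> borel_measurable lborel" using psi0_m by simp
  fix a b :: real assume "a \<le> b"
  then show "(psi0 has_integral (\<phi> b - \<phi> a)) {a..b}"
    using chain integrable_integral[OF psi0_i] by simp
qed

lemma bv:
  assumes psi: "is_weak_deriv \<phi> \<psi>"
  shows "\<psi> absolutely_integrable_on {a..b}"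
proof (cases "a \<le> b")
  case False
  then have "{a..b} = {}" by simp
  then show ?thesis by (simp add: set_integrable_def)
next
  case True
  have psiK: "integral {x..y} \<psi> = \<phi> y - \<phi> x" if "x \<le> y" for x y
    using psi that unfolding is_weak_deriv_def by (meson integral_unique)
  have "\<psi> absolutely_integrable_on cbox a b"
  proof (rule bounded_variation_absolutely_integrable_interval)
    show "\<psi> integrable_on cbox a b"
      using psi True unfolding is_weak_deriv_def by (auto simp: cbox_interval)
    fix d assume d: "d division_of cbox a b"
    have "(\<Sum>K\<in>d. norm (integral K \<psi>)) \<le> (\<Sum>K\<in>d. integral K (\<lambda>t. \<bar>psi0 t\<bar>))"
    proof (rule sum_mono)
      fix K assume K: "K \<in> d"
      obtain x y where Kxy: "K = cbox x y" using division_ofD(4)[OF d K] by blast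
      have "K \<noteq> {}" using division_ofD(3)[OF d K] .
      then have xy: "x \<le> y" unfolding Kxy by (simp add: cbox_interval)
      have "integral K \<psi> = integral K psi0"
        unfolding Kxy cbox_interval psiK[OF xy] chain[OF xy] ..
      also have "norm (integral K psi0) \<le> integral K (\<lambda>t. \<bar>psi0 t\<bar>)"
        unfolding Kxy cbox_interval
        by (rule integral_norm_bound_integral[OF psi0_i npsi0_i]) simp
      finally show "norm (integral K \<psi>) \<le> integral K (\<lambda>t. \<bar>psi0 t\<bar>)" .
    qed
    also have "\<dots> = integral (cbox a b) (\<lambda>t. \<bar>psi0 t\<bar>)"
      by (rule integral_combine_division_topdown[symmetric, OF _ d]) (simp add: cbox_interval npsi0_i)
    finally show "(\<Sum>K\<in>d. norm (integral K \<psi>)) \<le> integral (cbox a b) (\<lambda>t. \<bar>psi0 t\<bar>)" .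
  qed
  then show ?thesis by (simp add: cbox_interval)
qed

end



lemma amgm:
  fixes A D h m :: real
  assumes h: "h > 0" and m: "m > 0"
  shows "\<bar>A\<bar> * \<bar>D\<bar> \<le> sqrt 2 / m * (m\<^sup>2 * D\<^sup>2 / (2 * h) + h * A\<^sup>2 / 4)"
proof -
  define s where "s = sqrt (2::real)"
  have s: "s > 0" "s * s = 2" unfolding s_def by auto
  have "0 \<le> s / (2 * h * m) * (m * \<bar>D\<bar> - h * \<bar>A\<bar> / s)\<^sup>2"
    using s h m by simp
  also have "s / (2 * h * m) * (m * \<bar>D\<bar> - h * \<bar>A\<bar> / s)\<^sup>2
      = s / m * (m\<^sup>2 * D\<^sup>2 / (2 * h) + h * A\<^sup>2 / 4) - \<bar>A\<bar> * \<bar>D\<bar>"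
  proof -
    have "(m * \<bar>D\<bar> - h * \<bar>A\<bar> / s)\<^sup>2 = m\<^sup>2 * D\<^sup>2 - 2 * m * h * \<bar>A\<bar> * \<bar>D\<bar> / s + h\<^sup>2 * A\<^sup>2 / (s * s)"
      using s by (simp add: power2_eq_square field_simps)
    also have "\<dots> = m\<^sup>2 * D\<^sup>2 - 2 * m * h * \<bar>A\<bar> * \<bar>D\<bar> / s + h\<^sup>2 * A\<^sup>2 / 2"
      using s by simp
    finally have e1: "(m * \<bar>D\<bar> - h * \<bar>A\<bar> / s)\<^sup>2 = m\<^sup>2 * D\<^sup>2 - 2 * m * h * \<bar>A\<bar> * \<bar>D\<bar> / s + h\<^sup>2 * A\<^sup>2 / 2" .
    show ?thesis unfolding e1 using s h m by (simp add: power2_eq_square field_simps)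
  qed
  finally show ?thesis unfolding s_def by simp
qed

lemma eps_lemma:
  fixes X Y K :: real
  assumes K: "K \<ge> 0" and le: "\<And>e. 0 < e \<Longrightarrow> e \<le> 1 \<Longrightarrow> X \<le> Y + e * K"
  shows "X \<le> Y"
proof (rule field_le_epsilon)
  fix t :: real assume t: "t > 0"
  define e where "e = min 1 (t / (K + 1))"
  have e: "e > 0" "e \<le> 1" using t K unfolding e_def by auto
  have "e * K \<le> (t / (K + 1)) * K" using K unfolding e_def by (intro mult_right_mono) auto
  also have "\<dots> \<le> t" using t K by (simp add: field_simps)
  finally show "X \<le> Y + t" using le[OF e] by linarith
qed

lemma Ln_abs:
  fixes u :: complex
  assumes "norm u \<le> 1/2"
  shows "norm (Ln (1 + u)) \<le> norm u + 2 * (norm u)\<^sup>2"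
proof -
  have "norm (Ln (1 + u)) \<le> norm (Ln (1 + u) - u) + norm u"
    using norm_triangle_ineq[of "Ln (1 + u) - u" u] by simp
  then show ?thesis using Ln_est[OF assms] by linarith
qed




context ph_setting begin

lemma r2c: "continuous_on UNIV (\<lambda>t. (norm (v t))\<^sup>2)"
  by (intro continuous_intros vc)

lemma gc: "continuous_on UNIV (\<lambda>t. (1 - (norm (v t))\<^sup>2)\<^sup>2)"
  by (intro continuous_intros vc)

lemma w2_i: "(\<lambda>t. (norm (w t))\<^sup>2) integrable_on {x..y}"
proof -
  have "(\<lambda>t. (norm (w t))\<^sup>2) absolutely_integrable_on {x..y}"
    by (rule intL[OF w2]) (use wm in measurable)
  then show ?thesis using set_lebesgue_integral_eq_integral(1) by blast
qed

lemma g_i: "(\<lambda>t. (1 - (norm (v t))\<^sup>2)\<^sup>2) integrable_on {x..y}"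
  by (rule integrable_continuous_interval, rule continuous_on_subset[OF gc]) simp

context
  fixes \<psi> :: "real \<Rightarrow> real"
  assumes psi: "is_weak_deriv \<phi> \<psi>"
begin

lemma psi_ai: "\<psi> absolutely_integrable_on {x..y}" by (rule bv[OF psi])

lemma psi_i: "\<psi> integrable_on {x..y}"
  using psi_ai set_lebesgue_integral_eq_integral(1) by blast

lemma npsi_i: "(\<lambda>t. \<bar>\<psi> t\<bar>) integrable_on {x..y}"
proof -
  have "(\<lambda>t. norm (\<psi> t)) integrable_on {x..y}" using psi_ai absolutely_integrable_on_def by blast
  then show ?thesis by simp
qed

lemma f1_ai: "(\<lambda>t. ((norm (v t))\<^sup>2 - 1) * \<psi> t) absolutely_integrable_on {x..y}"
  by (rule AIP_c[OF _ psi_ai], rule continuous_on_subset[of UNIV]) (intro continuous_intros vc, simp)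

lemma f1_i: "(\<lambda>t. ((norm (v t))\<^sup>2 - 1) * \<psi> t) integrable_on {x..y}"
  using f1_ai set_lebesgue_integral_eq_integral(1) by blast

lemma psiK: "x \<le> y \<Longrightarrow> integral {x..y} \<psi> = \<phi> y - \<phi> x"
  using psi unfolding is_weak_deriv_def by (meson integral_unique)

end

end




context ph_setting begin

lemma main_local:
  fixes \<psi> :: "real \<Rightarrow> real" and m e :: real
  assumes psi: "is_weak_deriv \<phi> \<psi>" and m: "m > 0" "\<And>t. m \<le> norm (v t)" and e: "e > 0" "e \<le> 1"
  shows "\<exists>d>0. \<forall>x y. a \<le> x \<longrightarrow> x \<le> y \<longrightarrow> y \<le> b \<longrightarrow> y - x \<le> d \<longrightarrow>
   \<bar>integral {x..y} (\<lambda>t. ((norm (v t))\<^sup>2 - 1) * \<psi> t)\<bar>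
     \<le> sqrt 2 / m * ((1 + e)\<^sup>2 / 2 * integral {x..y} (\<lambda>t. (norm (w t))\<^sup>2)
          + 1/4 * integral {x..y} (\<lambda>t. (1 - (norm (v t))\<^sup>2)\<^sup>2) + e / 4 * (y - x))
       + e * integral {x..y} (\<lambda>t. \<bar>\<psi> t\<bar>)"
proof -
  have e1: "m * e / 2 > 0" using m e by simp
  from uc_ab[OF vc e1, of a b]
  obtain d1 where d1: "d1 > 0" "\<forall>x\<in>{a..b}. \<forall>y\<in>{a..b}. \<bar>y - x\<bar> \<le> d1 \<longrightarrow> dist (v y) (v x) < m * e / 2"
    by (elim exE conjE)
  from uc_ab[OF r2c e(1), of a b]
  obtain d2 where d2: "d2 > 0" "\<forall>x\<in>{a..b}. \<forall>y\<in>{a..b}. \<bar>y - x\<bar> \<le> d2 \<longrightarrow> dist ((norm (v y))\<^sup>2) ((norm (v x))\<^sup>2) < e"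
    by (elim exE conjE)
  from uc_ab[OF phc pi_gt_zero, of a b]
  obtain d3 where d3: "d3 > 0" "\<forall>x\<in>{a..b}. \<forall>y\<in>{a..b}. \<bar>y - x\<bar> \<le> d3 \<longrightarrow> dist (\<phi> y) (\<phi> x) < pi"
    by (elim exE conjE)
  from uc_ab[OF gc e(1), of a b]
  obtain d4 where d4: "d4 > 0" "\<forall>x\<in>{a..b}. \<forall>y\<in>{a..b}. \<bar>y - x\<bar> \<le> d4 \<longrightarrow> dist ((1 - (norm (v y))\<^sup>2)\<^sup>2) ((1 - (norm (v x))\<^sup>2)\<^sup>2) < e"
    by (elim exE conjE)
  define d where "d = min (min d1 d2) (min d3 d4)"
  have "d > 0" using d1 d2 d3 d4 unfolding d_def by simp
  moreover have "\<bar>integral {x..y} (\<lambda>t. ((norm (v t))\<^sup>2 - 1) * \<psi> t)\<bar>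
     \<le> sqrt 2 / m * ((1 + e)\<^sup>2 / 2 * integral {x..y} (\<lambda>t. (norm (w t))\<^sup>2)
          + 1/4 * integral {x..y} (\<lambda>t. (1 - (norm (v t))\<^sup>2)\<^sup>2) + e / 4 * (y - x))
       + e * integral {x..y} (\<lambda>t. \<bar>\<psi> t\<bar>)"
    if xy: "a \<le> x" "x \<le> y" "y \<le> b" "y - x \<le> d" for x y
  proof -
    let ?W = "integral {x..y} (\<lambda>t. (norm (w t))\<^sup>2)"
    let ?G = "integral {x..y} (\<lambda>t. (1 - (norm (v t))\<^sup>2)\<^sup>2)"
    let ?P = "integral {x..y} (\<lambda>t. \<bar>\<psi> t\<bar>)"
    let ?N = "integral {x..y} (\<lambda>t. norm (w t))"
    let ?F = "integral {x..y} (\<lambda>t. ((norm (v t))\<^sup>2 - 1) * \<psi> t)"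
    define h where "h = y - x"
    have W0: "?W \<ge> 0" by (rule integral_nonneg[OF w2_i]) simp
    have G0: "?G \<ge> 0" by (rule integral_nonneg[OF g_i]) simp
    have P0: "?P \<ge> 0" by (rule integral_nonneg[OF npsi_i[OF psi]]) simp
    have xin: "x \<in> {a..b}" and yin: "y \<in> {a..b}" using xy by auto
    show ?thesis
    proof (cases "h = 0")
      case True
      then have "y = x" unfolding h_def by simp
      then show ?thesis using W0 G0 P0 m e by simp
    next
      case False
      then have h: "h > 0" using xy unfolding h_def by simp
      define A where "A = (norm (v x))\<^sup>2 - 1"
      define D where "D = \<phi> y - \<phi> x"
      define u where "u = (v y - v x) / v x"
      have D_int: "integral {x..y} \<psi> = D" unfolding D_def by (rule psiK[OF psi xy(2)])
      have T1: "\<bar>?F - A * D\<bar> \<le> e * ?P"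
      proof -
        have iA: "(\<lambda>t. A * \<psi> t) integrable_on {x..y}" by (intro integrable_on_mult_right psi_i[OF psi])
        have "A * D = integral {x..y} (\<lambda>t. A * \<psi> t)"
          unfolding D_int[symmetric] by (rule integral_mult[OF psi_i[OF psi]])
        then have "?F - A * D = integral {x..y} (\<lambda>t. ((norm (v t))\<^sup>2 - 1) * \<psi> t - A * \<psi> t)"
          by (simp add: integral_diff[OF f1_i[OF psi] iA])
        also have "\<dots> = integral {x..y} (\<lambda>t. ((norm (v t))\<^sup>2 - (norm (v x))\<^sup>2) * \<psi> t)"
          unfolding A_def by (simp add: algebra_simps)
        finally have eq: "?F - A * D = integral {x..y} (\<lambda>t. ((norm (v t))\<^sup>2 - (norm (v x))\<^sup>2) * \<psi> t)" .
        have "norm (integral {x..y} (\<lambda>t. ((norm (v t))\<^sup>2 - (norm (v x))\<^sup>2) * \<psi> t)) \<le> integral {x..y} (\<lambda>t. e * \<bar>\<psi> t\<bar>)"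
        proof (rule integral_norm_bound_integral)
          show "(\<lambda>t. ((norm (v t))\<^sup>2 - (norm (v x))\<^sup>2) * \<psi> t) integrable_on {x..y}"
            using integrable_diff[OF f1_i[OF psi] iA] unfolding A_def by (simp add: algebra_simps)
          show "(\<lambda>t. e * \<bar>\<psi> t\<bar>) integrable_on {x..y}" by (intro integrable_on_mult_right npsi_i[OF psi])
          fix t assume t: "t \<in> {x..y}"
          then have tin: "t \<in> {a..b}" using xy by auto
          have "\<bar>t - x\<bar> \<le> d2" using t xy unfolding d_def by auto
          then have "\<bar>(norm (v t))\<^sup>2 - (norm (v x))\<^sup>2\<bar> \<le> e" using d2(2) xin tin by (force simp: dist_real_def)
          then have "\<bar>(norm (v t))\<^sup>2 - (norm (v x))\<^sup>2\<bar> * \<bar>\<psi> t\<bar> \<le> e * \<bar>\<psi> t\<bar>" by (rule mult_right_mono) simp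
          then show "norm (((norm (v t))\<^sup>2 - (norm (v x))\<^sup>2) * \<psi> t) \<le> e * \<bar>\<psi> t\<bar>" by (simp add: abs_mult)
        qed
        then have "\<bar>?F - A * D\<bar> \<le> integral {x..y} (\<lambda>t. e * \<bar>\<psi> t\<bar>)"
          unfolding eq real_norm_def .
        moreover have "integral {x..y} (\<lambda>t. e * \<bar>\<psi> t\<bar>) = e * ?P"
          by (rule integral_mult[OF npsi_i[OF psi], symmetric])
        ultimately show ?thesis by simp
      qed
      have dv: "norm (v y - v x) < m * e / 2"
        using d1(2) xin yin xy unfolding d_def by (auto simp: dist_norm)
      have rx: "m \<le> norm (v x)" by (rule m(2))
      have nu: "norm u * norm (v x) = norm (v y - v x)" unfolding u_def using nz[of x] by (simp add: norm_divide)
      have nu1: "norm u \<le> e / 2"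
      proof -
        have "norm u * m \<le> norm u * norm (v x)" using rx by (intro mult_left_mono) auto
        then have "norm u * m \<le> m * e / 2" using nu dv by linarith
        then show ?thesis using m(1) by (simp add: field_simps)
      qed
      have nu2: "norm u \<le> 1/2" using nu1 e by simp
      have ph: "\<bar>\<phi> y - \<phi> x\<bar> < pi" using d3(2) xin yin xy unfolding d_def by (auto simp: dist_real_def)
      have "D = Im (Ln (v y / v x))" using Ln_loc[OF ph] unfolding D_def by simp
      also have "v y / v x = 1 + u" unfolding u_def using nz[of x] by (simp add: field_simps)
      finally have DL: "D = Im (Ln (1 + u))" .
      have aD: "\<bar>D\<bar> \<le> norm u * (1 + e)"
      proof -
        have "\<bar>D\<bar> \<le> norm (Ln (1 + u))" unfolding DL by (rule abs_Im_le_cmod)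
        also have "\<dots> \<le> norm u + 2 * (norm u)\<^sup>2" by (rule Ln_abs[OF nu2])
        also have "\<dots> = norm u * (1 + 2 * norm u)" by (simp add: power2_eq_square algebra_simps)
        also have "\<dots> \<le> norm u * (1 + e)" using nu1 by (intro mult_left_mono) auto
        finally show ?thesis .
      qed
      have mD: "m * \<bar>D\<bar> \<le> (1 + e) * ?N"
      proof -
        have "m * \<bar>D\<bar> \<le> norm (v x) * \<bar>D\<bar>" using rx by (intro mult_right_mono) auto
        also have "\<dots> \<le> norm (v x) * (norm u * (1 + e))" using aD by (intro mult_left_mono) auto
        also have "\<dots> = (1 + e) * norm (v y - v x)" using nu by (simp add: algebra_simps)
        also have "\<dots> \<le> (1 + e) * ?N" using Dv_bound[OF xy(2)] e by (intro mult_left_mono) auto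
        finally show ?thesis .
      qed
      have CS: "?N\<^sup>2 \<le> h * ?W"
        unfolding h_def using CS_int[OF nwi w2_i xy(2)] by simp
      have N0: "?N \<ge> 0" by (rule integral_nonneg[OF nwi]) simp
      have mD2: "m\<^sup>2 * D\<^sup>2 \<le> (1 + e)\<^sup>2 * (h * ?W)"
      proof -
        have "m\<^sup>2 * D\<^sup>2 = (m * \<bar>D\<bar>)\<^sup>2" by (simp add: power2_eq_square)
        also have "\<dots> \<le> ((1 + e) * ?N)\<^sup>2" using mD m(1) by (intro power_mono) auto
        also have "\<dots> = (1 + e)\<^sup>2 * ?N\<^sup>2" by (simp add: power_mult_distrib)
        also have "\<dots> \<le> (1 + e)\<^sup>2 * (h * ?W)" using CS by (intro mult_left_mono) auto
        finally show ?thesis .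
      qed
      have mD3: "m\<^sup>2 * D\<^sup>2 / (2 * h) \<le> (1 + e)\<^sup>2 / 2 * ?W"
        using mD2 h by (simp add: divide_le_eq field_simps)
      have T4: "h * A\<^sup>2 \<le> ?G + e * h"
      proof -
        have "integral {x..y} (\<lambda>t. A\<^sup>2 - e) \<le> ?G"
        proof (rule integral_le)
          show "(\<lambda>t. A\<^sup>2 - e) integrable_on {x..y}" by (rule integrable_const_ivl)
          show "(\<lambda>t. (1 - (norm (v t))\<^sup>2)\<^sup>2) integrable_on {x..y}" by (rule g_i)
          fix t assume t: "t \<in> {x..y}"
          then have tin: "t \<in> {a..b}" using xy by auto
          have "\<bar>t - x\<bar> \<le> d4" using t xy unfolding d_def by auto
          then have "\<bar>(1 - (norm (v t))\<^sup>2)\<^sup>2 - (1 - (norm (v x))\<^sup>2)\<^sup>2\<bar> < e" using d4(2) xin tin by (force simp: dist_real_def)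
          moreover have "A\<^sup>2 = (1 - (norm (v x))\<^sup>2)\<^sup>2" unfolding A_def by (simp add: power2_eq_square algebra_simps)
          ultimately show "A\<^sup>2 - e \<le> (1 - (norm (v t))\<^sup>2)\<^sup>2" by linarith
        qed
        moreover have "integral {x..y} (\<lambda>t. A\<^sup>2 - e) = h * (A\<^sup>2 - e)" unfolding h_def using xy(2) by (simp add: integral_const_real)
        ultimately show ?thesis by (simp add: algebra_simps)
      qed
      have "\<bar>A * D\<bar> \<le> sqrt 2 / m * (m\<^sup>2 * D\<^sup>2 / (2 * h) + h * A\<^sup>2 / 4)"
        using amgm[OF h m(1), of A D] by (simp add: abs_mult)
      also have "\<dots> \<le> sqrt 2 / m * ((1 + e)\<^sup>2 / 2 * ?W + 1/4 * ?G + e / 4 * (y - x))"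
      proof (rule mult_left_mono)
        show "m\<^sup>2 * D\<^sup>2 / (2 * h) + h * A\<^sup>2 / 4 \<le> (1 + e)\<^sup>2 / 2 * ?W + 1/4 * ?G + e / 4 * (y - x)"
          using mD3 T4 unfolding h_def by linarith
      qed (use m in simp)
      finally show ?thesis using T1 by linarith
    qed
  qed
  ultimately show ?thesis by blast
qed

end



context ph_setting begin

lemma main_ab:
  fixes \<psi> :: "real \<Rightarrow> real" and m :: real
  assumes psi: "is_weak_deriv \<phi> \<psi>" and m: "m > 0" "\<And>t. m \<le> norm (v t)" and ab: "a \<le> b"
  shows "\<bar>integral {a..b} (\<lambda>t. ((norm (v t))\<^sup>2 - 1) * \<psi> t)\<bar>
     \<le> sqrt 2 / m * (1/2 * integral {a..b} (\<lambda>t. (norm (w t))\<^sup>2)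
          + 1/4 * integral {a..b} (\<lambda>t. (1 - (norm (v t))\<^sup>2)\<^sup>2))"
proof -
  let ?F = "\<lambda>x y. integral {x..y} (\<lambda>t. ((norm (v t))\<^sup>2 - 1) * \<psi> t)"
  let ?W = "\<lambda>x y. integral {x..y} (\<lambda>t. (norm (w t))\<^sup>2)"
  let ?G = "\<lambda>x y. integral {x..y} (\<lambda>t. (1 - (norm (v t))\<^sup>2)\<^sup>2)"
  let ?P = "\<lambda>x y. integral {x..y} (\<lambda>t. \<bar>\<psi> t\<bar>)"
  have W0: "?W a b \<ge> 0" by (rule integral_nonneg[OF w2_i]) simp
  have G0: "?G a b \<ge> 0" by (rule integral_nonneg[OF g_i]) simp
  have P0: "?P a b \<ge> 0" by (rule integral_nonneg[OF npsi_i[OF psi]]) simp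
  define s where "s = sqrt 2 / m"
  have s0: "s > 0" using m unfolding s_def by simp
  have key: "\<bar>?F a b\<bar> \<le> s * ((1 + e)\<^sup>2 / 2 * ?W a b + 1/4 * ?G a b + e / 4 * (b - a)) + e * ?P a b"
    if e: "e > 0" "e \<le> 1" for e
  proof -
    from main_local[OF psi m e, of a b, folded s_def]
    obtain d where d: "d > 0" "\<forall>x y. a \<le> x \<longrightarrow> x \<le> y \<longrightarrow> y \<le> b \<longrightarrow> y - x \<le> d \<longrightarrow>
       \<bar>?F x y\<bar> \<le> s * ((1 + e)\<^sup>2 / 2 * ?W x y + 1/4 * ?G x y + e / 4 * (y - x)) + e * ?P x y"
      by (elim exE conjE)
    show ?thesis
    proof (rule subadd_bound[where S = "\<lambda>x y. \<bar>?F x y\<bar>"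
          and A = "\<lambda>x y. s * ((1 + e)\<^sup>2 / 2 * ?W x y + 1/4 * ?G x y + e / 4 * (y - x)) + e * ?P x y", OF _ _ d(1)])
      fix x y z assume h: "a \<le> x" "x \<le> y" "y \<le> z" "z \<le> b"
      have "?F x y + ?F y z = ?F x z"
        by (rule Henstock_Kurzweil_Integration.integral_combine[OF h(2,3) f1_i[OF psi]])
      then show "\<bar>?F x z\<bar> \<le> \<bar>?F x y\<bar> + \<bar>?F y z\<bar>" by linarith
      have c1: "?W x y + ?W y z = ?W x z"
        by (rule Henstock_Kurzweil_Integration.integral_combine[OF h(2,3) w2_i])
      have c2: "?G x y + ?G y z = ?G x z"
        by (rule Henstock_Kurzweil_Integration.integral_combine[OF h(2,3) g_i])
      have c3: "?P x y + ?P y z = ?P x z"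
        by (rule Henstock_Kurzweil_Integration.integral_combine[OF h(2,3) npsi_i[OF psi]])
      show "s * ((1 + e)\<^sup>2 / 2 * ?W x z + 1/4 * ?G x z + e / 4 * (z - x)) + e * ?P x z
          = (s * ((1 + e)\<^sup>2 / 2 * ?W x y + 1/4 * ?G x y + e / 4 * (y - x)) + e * ?P x y)
          + (s * ((1 + e)\<^sup>2 / 2 * ?W y z + 1/4 * ?G y z + e / 4 * (z - y)) + e * ?P y z)"
        unfolding c1[symmetric] c2[symmetric] c3[symmetric] by (simp add: field_simps)
    next
      fix x y assume "a \<le> x" "x \<le> y" "y \<le> b" "y - x \<le> d"
      then show "\<bar>?F x y\<bar> \<le> s * ((1 + e)\<^sup>2 / 2 * ?W x y + 1/4 * ?G x y + e / 4 * (y - x)) + e * ?P x y"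
        using d(2) by blast
    qed (use ab in auto)
  qed
  note key = key[unfolded s_def]
  have s0: "sqrt 2 / m > 0" using m by simp
  show ?thesis
  proof (rule eps_lemma[where K = "sqrt 2 / m * (3/2 * ?W a b + (b - a) / 4) + ?P a b"])
    show "0 \<le> sqrt 2 / m * (3/2 * ?W a b + (b - a) / 4) + ?P a b"
    proof -
      have "0 \<le> 3/2 * ?W a b + (b - a) / 4" using W0 ab by simp
      then have "0 \<le> sqrt 2 / m * (3/2 * ?W a b + (b - a) / 4)" using s0 by (intro mult_nonneg_nonneg) auto
      then show ?thesis using P0 by linarith
    qed
    fix e :: real assume e: "0 < e" "e \<le> 1"
    have "(1 + e)\<^sup>2 \<le> 1 + 3 * e"
    proof -
      have "e * e \<le> e * 1" using e by (intro mult_left_mono) auto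
      then show ?thesis by (simp add: power2_eq_square algebra_simps)
    qed
    then have "(1 + e)\<^sup>2 / 2 * ?W a b \<le> (1 + 3 * e) / 2 * ?W a b"
      using W0 by (intro mult_right_mono divide_right_mono) auto
    then have "sqrt 2 / m * ((1 + e)\<^sup>2 / 2 * ?W a b + 1/4 * ?G a b + e / 4 * (b - a))
        \<le> sqrt 2 / m * ((1 + 3 * e) / 2 * ?W a b + 1/4 * ?G a b + e / 4 * (b - a))"
      using s0 by (intro mult_left_mono) auto
    also have "\<dots> = sqrt 2 / m * (1/2 * ?W a b + 1/4 * ?G a b) + e * (sqrt 2 / m * (3/2 * ?W a b + (b - a) / 4))"
    proof -
      have "\<And>k W G :: real. k * ((1 + 3 * e) / 2 * W + 1/4 * G + e / 4 * (b - a)) = k * (1/2 * W + 1/4 * G) + e * (k * (3/2 * W + (b - a) / 4))"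
        by (simp add: field_simps)
      then show ?thesis .
    qed
    finally show "\<bar>?F a b\<bar> \<le> sqrt 2 / m * (1/2 * ?W a b + 1/4 * ?G a b) + e * (sqrt 2 / m * (3/2 * ?W a b + (b - a) / 4) + ?P a b)"
      using key[OF e] by (simp add: algebra_simps)
  qed
qed

end



lemma hk_leb:
  fixes F :: "real \<Rightarrow> real"
  assumes i: "integrable lborel F"
  shows "integral {a..b} F = (\<integral>x. indicator {a..b} x * F x \<partial>lborel)"
proof -
  have m: "F \<in> borel_measurable borel" using borel_measurable_integrable[OF i] by simp
  have si: "set_integrable lebesgue {a..b} F" by (rule intL[OF i m])
  have "integral {a..b} F = (LINT x:{a..b}|lebesgue. F x)"
    by (rule set_lebesgue_integral_eq_integral(2)[OF si, symmetric])
  also have "\<dots> = (\<integral>x. indicator {a..b} x * F x \<partial>lebesgue)"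
    unfolding set_lebesgue_integral_def by simp
  also have "\<dots> = (\<integral>x. indicator {a..b} x * F x \<partial>lborel)"
    by (rule integral_completion) (use m in measurable)
  finally show ?thesis .
qed

lemma trunc_lim:
  fixes F :: "real \<Rightarrow> real"
  assumes i: "integrable lborel F"
  shows "(\<lambda>n::nat. \<integral>x. indicator {- real n..real n} x * F x \<partial>lborel) \<longlonglongrightarrow> (\<integral>x. F x \<partial>lborel)"
proof (rule integral_dominated_convergence[where w = "\<lambda>x. norm (F x)"])
  have m: "F \<in> borel_measurable borel" using borel_measurable_integrable[OF i] by simp
  show "F \<in> borel_measurable lborel" using m by simp
  show "(\<lambda>x. indicator {- real n..real n} x * F x) \<in> borel_measurable lborel" for n
    using m by measurable
  show "integrable lborel (\<lambda>x. norm (F x))" using i by simp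
  show "AE x in lborel. (\<lambda>n. indicator {- real n..real n} x * F x) \<longlonglongrightarrow> F x"
  proof (rule AE_I2)
    fix x :: real
    obtain N :: nat where N: "\<bar>x\<bar> \<le> real N" using real_arch_simple by blast
    have "eventually (\<lambda>n. indicator {- real n..real n} x * F x = F x) sequentially"
    proof (rule eventually_sequentiallyI[of N])
      fix n assume "N \<le> n"
      then have "real N \<le> real n" by simp
      then have "x \<in> {- real n..real n}" using N by auto
      then show "indicator {- real n..real n} x * F x = F x" by simp
    qed
    then show "(\<lambda>n. indicator {- real n..real n} x * F x) \<longlonglongrightarrow> F x" by (rule tendsto_eventually)
  qed
  show "AE x in lborel. norm (indicator {- real n..real n} x * F x) \<le> norm (F x)" for n
    by (rule AE_I2) (simp add: indicator_def)
qed

lemma trunc_le: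
  fixes F :: "real \<Rightarrow> real"
  assumes i: "integrable lborel F" and nn: "\<And>x. F x \<ge> 0"
  shows "integral {a..b} F \<le> (\<integral>x. F x \<partial>lborel)"
proof -
  have m: "F \<in> borel_measurable borel" using borel_measurable_integrable[OF i] by simp
  have "integral {a..b} F = (\<integral>x. indicator {a..b} x * F x \<partial>lborel)" by (rule hk_leb[OF i])
  also have "\<dots> \<le> (\<integral>x. F x \<partial>lborel)"
  proof (rule integral_mono)
    show "integrable lborel (\<lambda>x. indicator {a..b} x * F x)"
      using integrable_mult_indicator[of "{a..b}" lborel F] i by (simp add: mult.commute)
    show "integrable lborel F" by (rule i)
    show "indicator {a..b} x * F x \<le> F x" for x using nn[of x] by (simp add: indicator_def)
  qed
  finally show ?thesis .
qed

context ph_setting begin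

lemma main_R:
  fixes \<psi> :: "real \<Rightarrow> real" and m :: real
  assumes psi: "is_weak_deriv \<phi> \<psi>" and m: "m > 0" "\<And>t. m \<le> norm (v t)"
    and f1: "integrable lborel (\<lambda>t. ((norm (v t))\<^sup>2 - 1) * \<psi> t)"
    and g: "integrable lborel (\<lambda>t. (1 - (norm (v t))\<^sup>2)\<^sup>2)"
  shows "\<bar>\<integral>t. ((norm (v t))\<^sup>2 - 1) * \<psi> t \<partial>lborel\<bar>
     \<le> sqrt 2 / m * (1/2 * (\<integral>t. (norm (w t))\<^sup>2 \<partial>lborel) + 1/4 * (\<integral>t. (1 - (norm (v t))\<^sup>2)\<^sup>2 \<partial>lborel))"
proof -
  let ?f = "\<lambda>t. ((norm (v t))\<^sup>2 - 1) * \<psi> t"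
  let ?C = "sqrt 2 / m * (1/2 * (\<integral>t. (norm (w t))\<^sup>2 \<partial>lborel) + 1/4 * (\<integral>t. (1 - (norm (v t))\<^sup>2)\<^sup>2 \<partial>lborel))"
  have s0: "sqrt 2 / m > 0" using m by simp
  have lim: "(\<lambda>n::nat. \<bar>integral {- real n..real n} ?f\<bar>) \<longlonglongrightarrow> \<bar>\<integral>t. ?f t \<partial>lborel\<bar>"
    unfolding hk_leb[OF f1] by (intro tendsto_rabs trunc_lim[OF f1])
  show ?thesis
  proof (rule LIMSEQ_le_const2[OF lim], intro exI allI impI)
    fix n :: nat
    have "\<bar>integral {- real n..real n} ?f\<bar>
      \<le> sqrt 2 / m * (1/2 * integral {- real n..real n} (\<lambda>t. (norm (w t))\<^sup>2)
          + 1/4 * integral {- real n..real n} (\<lambda>t. (1 - (norm (v t))\<^sup>2)\<^sup>2))"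
      by (rule main_ab[OF psi m]) simp
    also have "\<dots> \<le> ?C"
    proof (rule mult_left_mono)
      have "integral {- real n..real n} (\<lambda>t. (norm (w t))\<^sup>2) \<le> (\<integral>t. (norm (w t))\<^sup>2 \<partial>lborel)"
        by (rule trunc_le[OF w2]) simp
      moreover have "integral {- real n..real n} (\<lambda>t. (1 - (norm (v t))\<^sup>2)\<^sup>2) \<le> (\<integral>t. (1 - (norm (v t))\<^sup>2)\<^sup>2 \<partial>lborel)"
        by (rule trunc_le[OF g]) simp
      ultimately show "1/2 * integral {- real n..real n} (\<lambda>t. (norm (w t))\<^sup>2)
          + 1/4 * integral {- real n..real n} (\<lambda>t. (1 - (norm (v t))\<^sup>2)\<^sup>2)
        \<le> 1/2 * (\<integral>t. (norm (w t))\<^sup>2 \<partial>lborel) + 1/4 * (\<integral>t. (1 - (norm (v t))\<^sup>2)\<^sup>2 \<partial>lborel)"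
        by linarith
    qed (use s0 in simp)
    finally show "\<bar>integral {- real n..real n} ?f\<bar> \<le> ?C" .
  qed
qed

end



theorem corollary3:
  fixes v :: "real \<Rightarrow> complex"
  assumes "X1_tilde v"
  shows "(momentum v \<noteq> 0 \<longrightarrow> (INF x. norm (v x)) \<le> energy v / (sqrt 2 * \<bar>momentum v\<bar>))
     \<and> (momentum v \<noteq> 0 \<and> 1 - energy v / (sqrt 2 * \<bar>momentum v\<bar>) > 0 \<longrightarrow>
         (\<forall>\<delta>. 0 < \<delta> \<and> \<delta> < 1 - energy v / (sqrt 2 * \<bar>momentum v\<bar>) \<longrightarrow>
               (\<exists>x. 1 - norm (v x) \<ge> \<delta>)))"
proof -
  have X1: "X1 v" and nz: "\<And>x. v x \<noteq> 0" using assms unfolding X1_tilde_def by auto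
  have ex_w: "\<exists>w. is_weak_deriv v w \<and> integrable lborel (\<lambda>x. (norm (w x))\<^sup>2)"
    and gint: "integrable lborel (\<lambda>x. (1 - (norm (v x))\<^sup>2)\<^sup>2)"
    using X1 unfolding X1_def by auto
  define w where "w = vderiv v"
  have wp: "is_weak_deriv v w \<and> integrable lborel (\<lambda>x. (norm (w x))\<^sup>2)"
    unfolding w_def vderiv_def by (rule someI_ex[OF ex_w])
  have vc: "continuous_on UNIV v" using weak_cont wp by blast
  obtain lg where lg: "continuous_on UNIV lg" "\<And>x. x \<in> UNIV \<Longrightarrow> v x = exp (lg x)"
    using continuous_logarithm_on_contractible[OF vc _ ] nz
    by (metis convex_UNIV convex_imp_contractible)
  have ex_ph: "\<exists>\<phi>. continuous_on UNIV \<phi> \<and> (\<forall>x. v x = complex_of_real (norm (v x)) * cis (\<phi> x))"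
  proof (intro exI conjI allI)
    show "continuous_on UNIV (\<lambda>x. Im (lg x))" by (intro continuous_intros lg(1))
    fix x
    have e: "v x = exp (lg x)" using lg(2) by simp
    then have "norm (v x) = exp (Re (lg x))" by simp
    then show "v x = complex_of_real (norm (v x)) * cis (Im (lg x))"
      using e by (simp add: exp_eq_polar)
  qed
  have php: "continuous_on UNIV (phase v) \<and> (\<forall>x. v x = complex_of_real (norm (v x)) * cis (phase v x))"
    unfolding phase_def by (rule someI_ex[OF ex_ph])
  interpret ph_setting v w "phase v"
    using wp php nz by unfold_locales auto
  define \<psi> where "\<psi> = (SOME \<psi>. is_weak_deriv (phase v) \<psi>)"
  have psi: "is_weak_deriv (phase v) \<psi>"
    unfolding \<psi>_def by (rule someI[of _ psi0], rule wd_phi)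
  let ?f = "\<lambda>x. ((norm (v x))\<^sup>2 - 1) * \<psi> x"
  have pdef: "momentum v = 1/2 * (\<integral>x. ?f x \<partial>lborel)"
    unfolding momentum_def \<psi>_def ..
  have Edef: "energy v = 1/2 * (\<integral>x. (norm (w x))\<^sup>2 \<partial>lborel) + 1/4 * (\<integral>x. (1 - (norm (v x))\<^sup>2)\<^sup>2 \<partial>lborel)"
    unfolding energy_def w_def ..
  have E0: "energy v \<ge> 0"
  proof -
    have "(\<integral>x. (norm (w x))\<^sup>2 \<partial>lborel) \<ge> 0" by (rule integral_nonneg_AE) simp
    moreover have "(\<integral>x. (1 - (norm (v x))\<^sup>2)\<^sup>2 \<partial>lborel) \<ge> 0" by (rule integral_nonneg_AE) simp
    ultimately show ?thesis unfolding Edef by simp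
  qed
  have bdd: "bdd_below (range (\<lambda>x. norm (v x)))" by (intro bdd_belowI[of _ 0]) auto
  have part1: "(INF x. norm (v x)) \<le> energy v / (sqrt 2 * \<bar>momentum v\<bar>)" if p: "momentum v \<noteq> 0"
  proof -
    let ?m = "INF x. norm (v x)"
    have R0: "energy v / (sqrt 2 * \<bar>momentum v\<bar>) \<ge> 0" using E0 by simp
    show ?thesis
    proof (cases "?m > 0")
      case False then show ?thesis using R0 by linarith
    next
      case True
      have mle: "\<And>t. ?m \<le> norm (v t)" using bdd by (rule cINF_lower) simp
      have fi: "integrable lborel ?f"
      proof (rule ccontr)
        assume "\<not> integrable lborel ?f"
        then have "(\<integral>x. ?f x \<partial>lborel) = 0" by (rule not_integrable_integral_eq)
        then show False using p pdef by simp
      qed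
      have "\<bar>\<integral>x. ?f x \<partial>lborel\<bar> \<le> sqrt 2 / ?m * energy v"
        unfolding Edef by (rule main_R[OF psi True mle fi gint])
      then have "2 * \<bar>momentum v\<bar> \<le> sqrt 2 / ?m * energy v" unfolding pdef by simp
      then have "?m * (2 * \<bar>momentum v\<bar>) \<le> sqrt 2 * energy v" using True by (simp add: field_simps)
      then have "?m * (sqrt 2 * \<bar>momentum v\<bar>) \<le> energy v"
      proof -
        assume h: "?m * (2 * \<bar>momentum v\<bar>) \<le> sqrt 2 * energy v"
        have s: "sqrt 2 * sqrt 2 = (2::real)" by simp
        have "sqrt 2 * (?m * (sqrt 2 * \<bar>momentum v\<bar>)) = ?m * (2 * \<bar>momentum v\<bar>)"
          using s by (simp add: algebra_simps)
        then have "sqrt 2 * (?m * (sqrt 2 * \<bar>momentum v\<bar>)) \<le> sqrt 2 * energy v" using h by linarith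
        then show ?thesis by (rule mult_left_le_imp_le) simp
      qed
      then show ?thesis using p by (simp add: field_simps)
    qed
  qed
  show ?thesis
  proof (intro conjI impI allI)
    assume "momentum v \<noteq> 0"
    then show "(INF x. norm (v x)) \<le> energy v / (sqrt 2 * \<bar>momentum v\<bar>)" by (rule part1)
  next
    fix \<delta> :: real
    assume h1: "momentum v \<noteq> 0 \<and> 1 - energy v / (sqrt 2 * \<bar>momentum v\<bar>) > 0"
      and h2: "0 < \<delta> \<and> \<delta> < 1 - energy v / (sqrt 2 * \<bar>momentum v\<bar>)"
    have "(INF x. norm (v x)) < 1 - \<delta>" using part1 h1 h2 by linarith
    then obtain x where "norm (v x) < 1 - \<delta>" using cINF_less_iff[OF _ bdd] by auto
    then show "\<exists>x. 1 - norm (v x) \<ge> \<delta>" by (intro exI[of _ x]) simp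
  qed
qed


end
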